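(* Let $\mathsf K$ be a field of characteristic $0$ and let $F(X,Y)=f_n(X)Y^n+\dots+f_0(X)\in\mathsf K[X,Y]$ have $Y$-degree $n$, with $F(0,Y)$ not identically $0$. Suppose $\mathsf L$ is a finite extension of $\mathsf K$, $e_1,\dots,e_n$ are positive integers and $y_i=\sum_{k=\kappa_i}^\infty a_{ik}x^{k/e_i}\in\mathsf L((x^{1/e_i}))$ with $a_{i\kappa_i}\ne0$ ($i=1,\dots,n$) are such that $F(x,Y)=f_n(x)(Y-y_1)\cdots(Y-y_n)$. Let $$r=\min\Bigl\{i+j:\ \frac{\partial^{i+j}F}{\partial X^i\partial Y^j}(0,0)\neq 0\Bigr\}.$$ Then $$r=\sum_{i:\ \kappa_i>0}\min\{1,\kappa_i/e_i\},$$ the sum being over those $i$ with $\kappa_i>0$.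
   Context: $\mathsf L((x^{1/e}))$ denotes the field of formal Laurent series in $x^{1/e}$ with coefficients in $\mathsf L$ (a field containing $\mathsf K((x))$). *)

theory Defs
  imports "HOL-Computational_Algebra.Computational_Algebra"
begin

text \<open>Bivariate polynomials F(X,Y) in K[X,Y] are represented as 'k poly poly:
  the outer variable is Y, the coefficients coeff F j = f_j(X) are polynomials in X.\<close>

definition eval2 :: "'a::idom poly poly \<Rightarrow> 'a \<Rightarrow> 'a \<Rightarrow> 'a" where
  "eval2 F a b = poly (poly F [:b:]) a"

definition pderiv_X :: "'a::idom poly poly \<Rightarrow> 'a poly poly" where
  "pderiv_X F = map_poly pderiv F"

definition pderiv_Y :: "'a::idom poly poly \<Rightarrow> 'a poly poly" where
  "pderiv_Y F = pderiv F"

definition mixed_pderiv :: "nat \<Rightarrow> nat \<Rightarrow> 'a::idom poly poly \<Rightarrow> 'a poly poly" where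
  "mixed_pderiv i j F = (pderiv_X ^^ i) ((pderiv_Y ^^ j) F)"

definition field_emb :: "('k::field \<Rightarrow> 'l::field) \<Rightarrow> bool" where
  "field_emb \<phi> \<longleftrightarrow> \<phi> 1 = 1 \<and> (\<forall>a b. \<phi> (a + b) = \<phi> a + \<phi> b \<and> \<phi> (a * b) = \<phi> a * \<phi> b)"

definition finite_extension :: "('k::field \<Rightarrow> 'l::field) \<Rightarrow> bool" where
  "finite_extension \<phi> \<longleftrightarrow> field_emb \<phi> \<and>
     (\<exists>B. finite B \<and> (\<forall>z. \<exists>c. z = (\<Sum>b\<in>B. \<phi> (c b) * b)))"

text \<open>Embedding of a polynomial p(x) in K[x] into L((t)), where t = x^(1/E), i.e. x = t^E.\<close>
definition poly_to_puiseux :: "('k::field \<Rightarrow> 'l::field) \<Rightarrow> nat \<Rightarrow> 'k poly \<Rightarrow> 'l fls" where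
  "poly_to_puiseux \<phi> E p = fls_compose_power (fps_to_fls (fps_of_poly (map_poly \<phi> p))) E"

end

theory Submission
  imports Defs
begin
unbundle fps_syntax

definition hi :: "int \<Rightarrow> 'a::field fls \<Rightarrow> bool" where
  "hi w z \<longleftrightarrow> (\<forall>m<w. z $$ m = 0)"

lemma hi_mono: "hi w z \<Longrightarrow> v \<le> w \<Longrightarrow> hi v z"
  unfolding hi_def by auto

lemma hi_zero[simp]: "hi w 0"
  unfolding hi_def by auto

lemma hi_sum: "(\<And>i. i \<in> A \<Longrightarrow> hi w (f i)) \<Longrightarrow> hi w (\<Sum>i\<in>A. f i)"
  unfolding hi_def by (simp add: fls_nth_sum)

lemma hi_sub: "hi w f \<Longrightarrow> w \<le> fls_subdegree f \<or> f = 0"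
  unfolding hi_def by (metis fls_subdegree_geI)

lemma hi_mult: assumes "hi a f" "hi b g" shows "hi (a+b) (f*g)"
proof (cases "f = 0 \<or> g = 0")
  case True thus ?thesis by auto
next
  case False
  hence "a \<le> fls_subdegree f" "b \<le> fls_subdegree g" using hi_sub assms by blast+
  thus ?thesis unfolding hi_def by (intro allI impI fls_times_nth_eq0) simp
qed

lemma hi_exact: assumes "hi a f" "f $$ a \<noteq> 0" shows "fls_subdegree f = a"
proof -
  have "f \<noteq> 0" using assms(2) by auto
  hence "a \<le> fls_subdegree f" using hi_sub assms(1) by blast
  moreover have "fls_subdegree f \<le> a" using fls_subdegree_leI assms(2) by blast
  ultimately show ?thesis by linarith
qed

lemma mult_exact:
  fixes f g :: "'a::field fls"
  assumes "hi a f" "f $$ a \<noteq> 0" "hi b g" "g $$ b \<noteq> 0"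
  shows "(f*g) $$ (a+b) \<noteq> 0"
proof -
  have "fls_subdegree f = a" "fls_subdegree g = b" using hi_exact assms by blast+
  thus ?thesis using fls_times_base[of f g] assms by simp
qed

lemma hi_step: assumes "hi a f" "f $$ a = 0" shows "hi (a+1) f"
  unfolding hi_def
proof (intro allI impI)
  fix m :: int assume "m < a + 1"
  hence "m < a \<or> m = a" by linarith
  thus "f $$ m = 0" using assms unfolding hi_def by auto
qed

definition lbv :: "int \<Rightarrow> 'a::field fls poly \<Rightarrow> int \<Rightarrow> bool" where
  "lbv c G w \<longleftrightarrow> (\<forall>j. hi (w - c * int j) (coeff G j))"

definition valv :: "int \<Rightarrow> 'a::field fls poly \<Rightarrow> int \<Rightarrow> bool" where
  "valv c G w \<longleftrightarrow> lbv c G w \<and> (\<exists>j. coeff G j $$ (w - c * int j) \<noteq> 0)"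

lemma valv_unique: "valv c G a \<Longrightarrow> valv c G b \<Longrightarrow> a = b"
proof -
  have *: "b \<le> a" if "valv c G a" "valv c G b" for a b
  proof -
    from that(1) obtain j where j: "coeff G j $$ (a - c * int j) \<noteq> 0" unfolding valv_def by auto
    from that(2) have "hi (b - c * int j) (coeff G j)" unfolding valv_def lbv_def by auto
    with j have "\<not> (a - c * int j < b - c * int j)" unfolding hi_def by blast
    thus ?thesis by linarith
  qed
  show "valv c G a \<Longrightarrow> valv c G b \<Longrightarrow> a = b" using *[of a b] *[of b a] by auto
qed

lemma valv_mult:
  assumes P: "valv c P a" and Q: "valv c Q b"
  shows "valv c (P*Q) (a+b)"
proof -
  have lbP: "\<And>j. hi (a - c * int j) (coeff P j)" and lbQ: "\<And>j. hi (b - c * int j) (coeff Q j)"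
    using P Q unfolding valv_def lbv_def by auto
  have lb: "lbv c (P*Q) (a+b)"
    unfolding lbv_def coeff_mult
  proof (intro allI hi_sum)
    fix k i :: nat assume "i \<in> {..k}"
    hence "a + b - c * int k = (a - c * int i) + (b - c * int (k - i))"
      by (simp add: of_nat_diff algebra_simps)
    thus "hi (a + b - c * int k) (coeff P i * coeff Q (k - i))"
      using hi_mult[OF lbP lbQ] by metis
  qed
  define i0 where "i0 = (LEAST i. coeff P i $$ (a - c * int i) \<noteq> 0)"
  define j0 where "j0 = (LEAST i. coeff Q i $$ (b - c * int i) \<noteq> 0)"
  have i0: "coeff P i0 $$ (a - c * int i0) \<noteq> 0"
    using P unfolding valv_def i0_def by (metis (mono_tags, lifting) LeastI)
  have j0: "coeff Q j0 $$ (b - c * int j0) \<noteq> 0"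
    using Q unfolding valv_def j0_def by (metis (mono_tags, lifting) LeastI)
  have ltP: "hi (a - c * int i + 1) (coeff P i)" if "i < i0" for i
    using hi_step[OF lbP] not_less_Least[OF that[unfolded i0_def]] by blast
  have ltQ: "hi (b - c * int i + 1) (coeff Q i)" if "i < j0" for i
    using hi_step[OF lbQ] not_less_Least[OF that[unfolded j0_def]] by blast
  define k where "k = i0 + j0"
  define w where "w = a + b - c * int k"
  have split: "\<And>i. i \<le> k \<Longrightarrow> w = (a - c * int i) + (b - c * int (k - i))"
    unfolding w_def by (simp add: of_nat_diff algebra_simps)
  have zero: "(coeff P i * coeff Q (k - i)) $$ w = 0" if "i \<le> k" "i \<noteq> i0" for i
  proof (cases "i < i0")
    case True
    have "hi ((a - c * int i + 1) + (b - c * int (k - i))) (coeff P i * coeff Q (k - i))"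
      by (rule hi_mult[OF ltP[OF True] lbQ])
    moreover have "(a - c * int i + 1) + (b - c * int (k - i)) = w + 1" using split[OF that(1)] by simp
    ultimately have "hi (w+1) (coeff P i * coeff Q (k - i))" by simp
    thus ?thesis unfolding hi_def by auto
  next
    case False
    hence "k - i < j0" using that unfolding k_def by auto
    have "hi ((a - c * int i) + (b - c * int (k - i) + 1)) (coeff P i * coeff Q (k - i))"
      by (rule hi_mult[OF lbP ltQ[OF \<open>k - i < j0\<close>]])
    moreover have "(a - c * int i) + (b - c * int (k - i) + 1) = w + 1" using split[OF that(1)] by simp
    ultimately have "hi (w+1) (coeff P i * coeff Q (k - i))" by simp
    thus ?thesis unfolding hi_def by auto
  qed
  have "coeff (P*Q) k $$ w = (\<Sum>i\<le>k. (coeff P i * coeff Q (k - i)) $$ w)"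
    by (simp add: coeff_mult fls_nth_sum)
  also have "\<dots> = (coeff P i0 * coeff Q (k - i0)) $$ w"
    by (subst sum.remove[of _ i0]) (use zero k_def in \<open>auto intro!: sum.neutral\<close>)
  also have "\<dots> \<noteq> 0"
    using mult_exact[OF lbP i0 lbQ j0] split[of i0] unfolding k_def by simp
  finally show ?thesis using lb unfolding valv_def w_def by blast
qed

lemma valv_one: "valv c (1 :: 'a::field fls poly) 0"
  unfolding valv_def lbv_def
proof (intro conjI allI exI)
  fix j show "hi (0 - c * int j) (coeff (1 :: 'a fls poly) j)"
    by (cases j) (auto simp: hi_def coeff_1)
next
  show "coeff (1 :: 'a fls poly) 0 $$ (0 - c * int 0) \<noteq> 0" by simp
qed

lemma valv_lin:
  fixes z :: "'a::field fls"
  assumes "z \<noteq> 0"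
  shows "valv c [:-z, 1:] (min c (fls_subdegree z))"
  unfolding valv_def lbv_def
proof (intro conjI allI)
  fix j
  show "hi (min c (fls_subdegree z) - c * int j) (coeff [:- z, 1:] j)"
  proof (cases j)
    case 0 thus ?thesis by (auto simp: hi_def)
  next
    case (Suc j') thus ?thesis
      by (cases j') (auto simp: hi_def)
  qed
next
  show "\<exists>j. coeff [:- z, 1:] j $$ (min c (fls_subdegree z) - c * int j) \<noteq> 0"
  proof (cases "fls_subdegree z \<le> c")
    case True thus ?thesis using assms by (intro exI[of _ 0]) auto
  next
    case False thus ?thesis by (intro exI[of _ 1]) auto
  qed
qed

lemma valv_smult:
  assumes "valv c P w" "u \<noteq> 0"
  shows "valv c (smult u P) (fls_subdegree u + w)"
proof -
  have hu: "hi (fls_subdegree u) u" unfolding hi_def by auto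
  have lbP: "\<And>j. hi (w - c * int j) (coeff P j)" using assms unfolding valv_def lbv_def by auto
  obtain j where j: "coeff P j $$ (w - c * int j) \<noteq> 0" using assms unfolding valv_def by auto
  show ?thesis unfolding valv_def lbv_def
  proof (intro conjI allI exI)
    fix i show "hi (fls_subdegree u + w - c * int i) (coeff (smult u P) i)"
      using hi_mult[OF hu lbP[of i]] by (simp add: algebra_simps)
  next
    show "coeff (smult u P) j $$ (fls_subdegree u + w - c * int j) \<noteq> 0"
      using mult_exact[OF hu _ lbP j] assms(2) by (simp add: algebra_simps)
  qed
qed

lemma valv_prod:
  fixes n :: nat
  assumes "\<And>i. i < n \<Longrightarrow> z i \<noteq> 0"
  shows "valv c (\<Prod>i<n. [:- z i, 1:]) (\<Sum>i<n. min c (fls_subdegree (z i)))"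
  using assms
proof (induction n)
  case 0 thus ?case using valv_one by simp
next
  case (Suc n)
  have "valv c ((\<Prod>i<n. [:- z i, 1:]) * [:- z n, 1:]) ((\<Sum>i<n. min c (fls_subdegree (z i))) + min c (fls_subdegree (z n)))"
    by (rule valv_mult[OF Suc.IH valv_lin]) (use Suc.prems in auto)
  thus ?case by (simp only: prod.lessThan_Suc sum.lessThan_Suc)
qed


lemma coeff_pderiv_iter:
  "coeff ((pderiv ^^ j) (p :: 'a::idom poly)) k = pochhammer (of_nat (Suc k)) j * coeff p (k + j)"
proof (induction j arbitrary: k)
  case 0 thus ?case by simp
next
  case (Suc j)
  have "coeff ((pderiv ^^ Suc j) p) k = of_nat (Suc k) * coeff ((pderiv ^^ j) p) (Suc k)"
    by (simp add: coeff_pderiv)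
  also have "\<dots> = of_nat (Suc k) * (pochhammer (of_nat (Suc (Suc k))) j * coeff p (Suc k + j))"
    by (simp add: Suc.IH)
  also have "\<dots> = pochhammer (of_nat (Suc k)) (Suc j) * coeff p (k + Suc j)"
    by (simp add: pochhammer_rec mult_ac)
  finally show ?case .
qed

lemma coeff0_pderiv_iter: "coeff ((pderiv ^^ j) (p :: 'a::idom poly)) 0 = of_nat (fact j) * coeff p j"
proof -
  have "of_nat (fact j) = (of_nat (pochhammer 1 j :: nat) :: 'a)" by (simp add: pochhammer_fact)
  also have "\<dots> = pochhammer 1 j" using pochhammer_of_nat[of "1::nat" j, where 'a='a] by simp
  finally show ?thesis using coeff_pderiv_iter[of j p 0] by simp
qed

lemma coeff0_map_pderiv_iter:
  "coeff ((map_poly pderiv ^^ i) (G :: 'a::idom poly poly)) 0 = (pderiv ^^ i) (coeff G 0)"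
  by (induction i) (simp_all add: coeff_map_poly)

lemma eval_mixed:
  fixes F :: "'a::idom poly poly"
  shows "eval2 (mixed_pderiv i j F) 0 0 = of_nat (fact i) * (of_nat (fact j) * coeff (coeff F j) i)"
proof -
  have X: "pderiv_X = (map_poly pderiv :: 'a poly poly \<Rightarrow> _)" by (rule ext) (simp add: pderiv_X_def)
  have Y: "pderiv_Y = (pderiv :: 'a poly poly \<Rightarrow> _)" by (rule ext) (simp add: pderiv_Y_def)
  have "eval2 (mixed_pderiv i j F) 0 0 = poly ((pderiv ^^ i) (coeff ((pderiv ^^ j) F) 0)) 0"
    unfolding eval2_def mixed_pderiv_def X Y by (simp add: poly_0_coeff_0 coeff0_map_pderiv_iter)
  also have "\<dots> = of_nat (fact i) * coeff (of_nat (fact j) * coeff F j) i"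
    by (simp add: poly_0_coeff_0 coeff0_pderiv_iter)
  also have "coeff (of_nat (fact j) * coeff F j) i = of_nat (fact j) * coeff (coeff F j) i"
    by (simp add: of_nat_poly)
  finally show ?thesis .
qed

lemma ptp_nth:
  assumes "E > 0" "\<phi> 0 = 0"
  shows "poly_to_puiseux \<phi> E p $$ m =
    (if 0 \<le> m \<and> int E dvd m then \<phi> (coeff p (nat (m div int E))) else 0)"
  unfolding poly_to_puiseux_def using assms
  by (auto simp: fls_nth_compose_power coeff_map_poly pos_imp_zdiv_neg_iff)

lemma ptp_0[simp]: "poly_to_puiseux \<phi> E 0 = 0"
  unfolding poly_to_puiseux_def by simp

lemma subdeg_compose_power:
  fixes f :: "'a::field fls"
  assumes "f \<noteq> 0" "d > 0"
  shows "fls_subdegree (fls_compose_power f d) = int d * fls_subdegree f"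
proof (rule hi_exact)
  show "hi (int d * fls_subdegree f) (fls_compose_power f d)"
    unfolding hi_def
  proof (intro allI impI)
    fix m assume m: "m < int d * fls_subdegree f"
    show "fls_compose_power f d $$ m = 0"
    proof (cases "int d dvd m")
      case True
      then obtain q where q: "m = int d * q" by auto
      with m assms have "q < fls_subdegree f" by (simp add: mult_less_cancel_left)
      thus ?thesis using q assms by (simp add: fls_nth_compose_power)
    qed (use assms in \<open>simp add: fls_nth_compose_power\<close>)
  qed
  show "fls_compose_power f d $$ (int d * fls_subdegree f) \<noteq> 0"
    using assms by (simp add: fls_nth_compose_power)
qed


theorem mainTheorem6:
  fixes F :: "'k::field_char_0 poly poly"
    and \<phi> :: "'k \<Rightarrow> 'l::field"
    and n :: nat
    and e :: "nat \<Rightarrow> nat"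
    and y :: "nat \<Rightarrow> 'l fls"
  assumes degF: "degree F = n"
    and F0: "poly (map_poly (\<lambda>p. poly p 0) F) \<noteq> poly 0"
    and ext: "finite_extension \<phi>"
    and epos: "\<forall>i<n. e i > 0"
    and ynz: "\<forall>i<n. y i \<noteq> 0"
    and fact: "map_poly (poly_to_puiseux \<phi> (\<Prod>i<n. e i)) F =
       smult (poly_to_puiseux \<phi> (\<Prod>i<n. e i) (coeff F n))
         (\<Prod>i<n. [: - fls_compose_power (y i) ((\<Prod>i<n. e i) div e i), 1 :])"
  shows "real (LEAST m. \<exists>i j. i + j = m \<and> eval2 (mixed_pderiv i j F) 0 0 \<noteq> 0) =
    (\<Sum>i\<in>{i. i < n \<and> fls_subdegree (y i) > 0}.
        min 1 (real_of_int (fls_subdegree (y i)) / real (e i)))"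
proof -
  define E where "E = (\<Prod>i<n. e i)"
  have Epos: "E > 0" unfolding E_def using epos by (simp add: prod_pos)
  have emb: "field_emb \<phi>" using ext unfolding finite_extension_def by auto
  have phi0: "\<phi> 0 = 0"
  proof -
    have "\<phi> (0 + 0) = \<phi> 0 + \<phi> 0" using emb unfolding field_emb_def by blast
    hence "\<phi> 0 = \<phi> 0 + \<phi> 0" by simp
    thus ?thesis by (metis add_cancel_right_right)
  qed
  have phinz: "\<phi> x \<noteq> 0" if "x \<noteq> 0" for x
  proof
    assume "\<phi> x = 0"
    have "\<phi> (x * inverse x) = \<phi> x * \<phi> (inverse x)" using emb unfolding field_emb_def by blast
    with that \<open>\<phi> x = 0\<close> have "\<phi> 1 = 0" by simp
    thus False using emb unfolding field_emb_def by simp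
  qed
  define ptp where "ptp = poly_to_puiseux \<phi> E"
  have ptp_nth': "ptp p $$ m = (if 0 \<le> m \<and> int E dvd m then \<phi> (coeff p (nat (m div int E))) else 0)"
    for p m unfolding ptp_def using ptp_nth[of E \<phi>, OF Epos phi0] by blast
  define P where "P m \<longleftrightarrow> (\<exists>i j. i + j = m \<and> coeff (coeff F j) i \<noteq> 0)" for m
  have Peq: "(\<exists>i j. i + j = m \<and> eval2 (mixed_pderiv i j F) 0 0 \<noteq> 0) \<longleftrightarrow> P m" for m
    unfolding P_def eval_mixed by simp
  define r where "r = (LEAST m. P m)"
  have LHS: "(LEAST m. \<exists>i j. i + j = m \<and> eval2 (mixed_pderiv i j F) 0 0 \<noteq> 0) = r"
    unfolding r_def Peq by simp
  have "map_poly (\<lambda>p. poly p 0) F \<noteq> 0" using F0 by auto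
  then obtain j0 where "coeff (map_poly (\<lambda>p. poly p 0) F) j0 \<noteq> 0"
    by (metis leading_coeff_0_iff)
  hence j0: "coeff (coeff F j0) 0 \<noteq> 0" by (simp add: coeff_map_poly poly_0_coeff_0)
  hence "P j0" unfolding P_def by (intro exI[of _ 0] exI[of _ j0]) simp
  hence "P r" unfolding r_def by (rule LeastI)
  then obtain i1 j1 where ij1: "i1 + j1 = r" "coeff (coeff F j1) i1 \<noteq> 0" unfolding P_def by auto
  have notP: "\<not> P m" if "m < r" for m using not_less_Least[OF that[unfolded r_def]] by blast
  define G where "G = map_poly ptp F"
  have cG: "coeff G j = ptp (coeff F j)" for j
    unfolding G_def by (simp add: coeff_map_poly ptp_def)
  have vE: "valv (int E) G (int E * int r)"
    unfolding valv_def lbv_def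
  proof (intro conjI allI exI)
    fix j
    show "hi (int E * int r - int E * int j) (coeff G j)"
      unfolding hi_def cG
    proof (intro allI impI)
      fix m assume m: "m < int E * int r - int E * int j"
      show "ptp (coeff F j) $$ m = 0"
      proof (cases "0 \<le> m \<and> int E dvd m")
        case True
        then obtain q where q: "m = int E * q" by auto
        with True Epos have q0: "0 \<le> q" by (simp add: zero_le_mult_iff)
        from m q have "int E * (q + int j) < int E * int r" by (simp add: algebra_simps)
        hence "q + int j < int r" using Epos by (simp add: mult_less_cancel_left)
        hence "nat q + j < r" using q0 by linarith
        hence "\<not> P (nat q + j)" by (rule notP)
        hence "coeff (coeff F j) (nat q) = 0" unfolding P_def by auto
        thus ?thesis using True q Epos phi0 by (simp add: ptp_nth')
      qed (auto simp: ptp_nth')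
    qed
  next
    have "int E * int r - int E * int j1 = int E * int i1" using ij1(1) by (simp add: algebra_simps flip: ij1(1))
    thus "coeff G j1 $$ (int E * int r - int E * int j1) \<noteq> 0"
      using ij1(2) Epos phinz by (simp add: cG ptp_nth')
  qed
  have v0: "valv 0 G 0"
    unfolding valv_def lbv_def
  proof (intro conjI allI exI)
    fix j show "hi (0 - 0 * int j) (coeff G j)" unfolding hi_def cG by (simp add: ptp_nth')
  next
    show "coeff G j0 $$ (0 - 0 * int j0) \<noteq> 0" using j0 phinz by (simp add: cG ptp_nth')
  qed
  define d where "d i = E div e i" for i
  have de: "d i * e i = E" if "i < n" for i
    unfolding d_def E_def using that by (simp add: dvd_div_mult_self dvd_prodI)
  have dpos: "d i > 0" if "i < n" for i
    using de[OF that] Epos by (metis gr0I mult_is_0 less_irrefl)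
  define z where "z i = fls_compose_power (y i) (d i)" for i
  have znz: "z i \<noteq> 0" if "i < n" for i
  proof -
    have "z i $$ (int (d i) * fls_subdegree (y i)) \<noteq> 0"
      unfolding z_def using dpos[OF that] ynz that by (simp add: fls_nth_compose_power)
    thus ?thesis by auto
  qed
  have zsub: "fls_subdegree (z i) = int (d i) * fls_subdegree (y i)" if "i < n" for i
    unfolding z_def using subdeg_compose_power ynz dpos that by blast
  have "F \<noteq> 0" using F0 by auto
  hence "coeff F n \<noteq> 0" using degF by auto
  hence "coeff (coeff F n) (degree (coeff F n)) \<noteq> 0" by simp
  hence unz: "ptp (coeff F n) \<noteq> 0"
  proof -
    assume a: "coeff (coeff F n) (degree (coeff F n)) \<noteq> 0"
    have "ptp (coeff F n) $$ (int E * int (degree (coeff F n))) \<noteq> 0"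
      using a Epos phinz by (simp add: ptp_nth')
    thus ?thesis by auto
  qed
  define u where "u = ptp (coeff F n)"
  have Geq: "G = smult u (\<Prod>i<n. [:- z i, 1:])"
    using fact unfolding G_def u_def z_def d_def ptp_def E_def by simp
  have vR: "valv c G (fls_subdegree u + (\<Sum>i<n. min c (fls_subdegree (z i))))" for c
    unfolding Geq by (rule valv_smult[OF valv_prod]) (use znz unz u_def in auto)
  have e1: "int E * int r = fls_subdegree u + (\<Sum>i<n. min (int E) (fls_subdegree (z i)))"
    using valv_unique[OF vE vR] .
  have e2: "0 = fls_subdegree u + (\<Sum>i<n. min 0 (fls_subdegree (z i)))"
    using valv_unique[OF v0 vR] .
  define S where "S = {i. i < n \<and> fls_subdegree (y i) > 0}"
  have "int E * int r = (\<Sum>i<n. min (int E) (fls_subdegree (z i)) - min 0 (fls_subdegree (z i)))"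
    using e1 e2 by (simp add: sum_subtractf)
  also have "\<dots> = (\<Sum>i<n. if fls_subdegree (y i) > 0 then min (int E) (fls_subdegree (z i)) else 0)"
  proof (rule sum.cong)
    fix i assume "i \<in> {..<n}"
    hence i: "i < n" by auto
    have "fls_subdegree (z i) > 0 \<longleftrightarrow> fls_subdegree (y i) > 0"
      using zsub[OF i] dpos[OF i] by (simp add: zero_less_mult_iff)
    thus "min (int E) (fls_subdegree (z i)) - min 0 (fls_subdegree (z i)) =
      (if fls_subdegree (y i) > 0 then min (int E) (fls_subdegree (z i)) else 0)"
      using Epos by auto
  qed simp
  also have "\<dots> = (\<Sum>i\<in>S. min (int E) (fls_subdegree (z i)))"
  proof -
    have "S = {i \<in> {..<n}. fls_subdegree (y i) > 0}" unfolding S_def by auto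
    thus ?thesis using sum.inter_filter[OF finite_lessThan[of n], of "\<lambda>i. min (int E) (fls_subdegree (z i))" "\<lambda>i. 0 < fls_subdegree (y i)"] by simp
  qed
  finally have eq: "int E * int r = (\<Sum>i\<in>S. min (int E) (fls_subdegree (z i)))" .
  have "real E * real r = (\<Sum>i\<in>S. real_of_int (min (int E) (fls_subdegree (z i))))"
    using arg_cong[OF eq, of real_of_int] by simp
  also have "\<dots> = (\<Sum>i\<in>S. real E * min 1 (real_of_int (fls_subdegree (y i)) / real (e i)))"
  proof (rule sum.cong)
    fix i assume "i \<in> S"
    hence i: "i < n" unfolding S_def by auto
    have ei: "real (e i) > 0" using epos i by simp
    have Ed: "real E = real (d i) * real (e i)" using de[OF i] by (metis of_nat_mult)
    have "real_of_int (fls_subdegree (z i)) = real (d i) * real_of_int (fls_subdegree (y i))"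
      using zsub[OF i] by simp
    also have "\<dots> = real E * (real_of_int (fls_subdegree (y i)) / real (e i))"
      using ei Ed by (simp add: field_simps)
    finally have zz: "real_of_int (fls_subdegree (z i)) = real E * (real_of_int (fls_subdegree (y i)) / real (e i))" .
    have "real_of_int (min (int E) (fls_subdegree (z i))) = min (real E) (real_of_int (fls_subdegree (z i)))"
      by simp
    also have "\<dots> = real E * min 1 (real_of_int (fls_subdegree (y i)) / real (e i))"
      unfolding zz using Epos by (simp add: min_mult_distrib_left)
    finally show "real_of_int (min (int E) (fls_subdegree (z i))) =
      real E * min 1 (real_of_int (fls_subdegree (y i)) / real (e i))" .
  qed simp
  also have "\<dots> = real E * (\<Sum>i\<in>S. min 1 (real_of_int (fls_subdegree (y i)) / real (e i)))"
    by (simp add: sum_distrib_left)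
  finally have "real r = (\<Sum>i\<in>S. min 1 (real_of_int (fls_subdegree (y i)) / real (e i)))"
    using Epos by simp
  thus ?thesis unfolding LHS S_def .
qed

end
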